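(* Consider the system of ordinary differential equations \[ \dot u=r_{1}u(1-u)-a_{12}uv-a_{13}uw,\qquad \dot v=r_{2}v(1-v)+a_{21}uv,\qquad \dot w=-\mu w+a_{31}uw, \] with all parameters $r_1,r_2,\mu,a_{12},a_{13},a_{21},a_{31}$ positive. If $a_{31}\le\mu$, then every solution with positive initial data $u(0),v(0),w(0)>0$ satisfies $\lim_{t\to\infty}w(t)=0$. *)

theory Defs
  imports Complex_Main
begin

end

theory Submission imports Defs "HOL-Analysis.Analysis" begin

lemma mvt0:
  fixes f D :: "real \<Rightarrow> real"
  assumes d: "\<And>t. t \<ge> 0 \<Longrightarrow> (f has_real_derivative D t) (at t within {0..})"
    and "0 \<le> a" "a < b"
  shows "\<exists>x. a < x \<and> x < b \<and> f b - f a = D x * (b - a)"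
proof -
  have "\<exists>x\<in>{a<..<b}. f b - f a = (\<lambda>h. D x * h) (b - a)"
  proof (rule mvt_simple[OF \<open>a < b\<close>])
    fix x assume "a \<le> x" "x \<le> b"
    then have "(f has_real_derivative D x) (at x within {0..})" using d \<open>0 \<le> a\<close> by auto
    then have "(f has_real_derivative D x) (at x within {a..b})"
      by (rule has_field_derivative_subset) (use \<open>0 \<le> a\<close> in auto)
    then show "(f has_derivative (\<lambda>h. D x * h)) (at x within {a..b})"
      by (simp add: has_field_derivative_def)
  qed
  then show ?thesis by (auto simp: mult.commute)
qed

lemma first_hit:
  fixes f :: "real \<Rightarrow> real"
  assumes "continuous_on {a..b} f" "a \<le> b" "f b \<le> c"
  shows "\<exists>s\<in>{a..b}. f s \<le> c \<and> (\<forall>t\<in>{a..<s}. f t > c)"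
proof -
  let ?K = "{a..b} \<inter> f -` {..c}"
  have "closed ?K" by (rule continuous_closed_preimage[OF assms(1) closed_atLeastAtMost closed_atMost])
  then have "compact ?K" by (simp add: compact_eq_bounded_closed bounded_Int)
  moreover have "?K \<noteq> {}" using assms by auto
  ultimately obtain s where s: "s \<in> ?K" "\<forall>t\<in>?K. s \<le> t" using compact_attains_inf by blast
  have "f t > c" if "t \<in> {a..<s}" for t
  proof (rule ccontr)
    assume "\<not> f t > c"
    then have "t \<in> ?K" using that s by auto
    then have "s \<le> t" using s(2) by blast
    then show False using that by simp
  qed
  then show ?thesis using s by blast
qed

lemma last_hit:
  fixes f :: "real \<Rightarrow> real"
  assumes "continuous_on {a..b} f" "a \<le> b" "f a \<le> c"
  shows "\<exists>s\<in>{a..b}. f s \<le> c \<and> (\<forall>t\<in>{s<..b}. f t > c)"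
proof -
  let ?K = "{a..b} \<inter> f -` {..c}"
  have "closed ?K" by (rule continuous_closed_preimage[OF assms(1) closed_atLeastAtMost closed_atMost])
  then have "compact ?K" by (simp add: compact_eq_bounded_closed bounded_Int)
  moreover have "?K \<noteq> {}" using assms by auto
  ultimately obtain s where s: "s \<in> ?K" "\<forall>t\<in>?K. t \<le> s" using compact_attains_sup by blast
  have "f t > c" if "t \<in> {s<..b}" for t
  proof (rule ccontr)
    assume "\<not> f t > c"
    then have "t \<in> ?K" using that s by auto
    then have "t \<le> s" using s(2) by blast
    then show False using that by simp
  qed
  then show ?thesis using s by blast
qed

lemma cont0:
  fixes f D :: "real \<Rightarrow> real"
  assumes d: "\<And>t. t \<ge> 0 \<Longrightarrow> (f has_real_derivative D t) (at t within {0..})"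
  shows "continuous_on {0..} f"
  unfolding continuous_on_eq_continuous_within
proof
  fix x :: real assume "x \<in> {0..}"
  then have "(f has_real_derivative D x) (at x within {0..})" using d by auto
  then show "continuous (at x within {0..}) f" by (rule DERIV_continuous)
qed

lemma pos0:
  fixes f g :: "real \<Rightarrow> real"
  assumes d: "\<And>t. t \<ge> 0 \<Longrightarrow> (f has_real_derivative f t * g t) (at t within {0..})"
    and g: "continuous_on {0..} g" and f0: "f 0 > 0" and t: "t \<ge> 0"
  shows "f t > 0"
proof (rule ccontr)
  assume "\<not> f t > 0"
  hence ft: "f t \<le> 0" by simp
  have cf: "continuous_on {0..} f" by (rule cont0[OF d])
  have cft: "continuous_on {0..t} f" by (rule continuous_on_subset[OF cf]) auto
  obtain s where s: "s \<in> {0..t}" "f s \<le> 0" "\<forall>x\<in>{0..<s}. f x > 0"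
    using first_hit[OF cft t ft] by blast
  have s0: "s > 0" using s f0 by (cases "s = 0") auto
  have cgs: "continuous_on {0..s} g" by (rule continuous_on_subset[OF g]) auto
  obtain y where "y \<in> {0..s}" "\<forall>z\<in>{0..s}. g y \<le> g z"
    using continuous_attains_inf[OF compact_Icc _ cgs] s0 by auto
  then obtain m where m: "\<forall>y\<in>{0..s}. g y \<ge> m" by blast
  define h where "h = (\<lambda>x. f x * exp (- m * x))"
  have dh: "(h has_real_derivative (f x * g x * exp (- m * x) + exp (- m * x) * (- m) * f x)) (at x within {0..})"
    if "x \<ge> 0" for x
  proof -
    have e: "((\<lambda>x. exp (- m * x)) has_real_derivative exp (- m * x) * (- m)) (at x within {0..})"
      by (auto intro!: derivative_eq_intros)
    show ?thesis unfolding h_def by (rule DERIV_mult[OF d[OF that] e])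
  qed
  obtain x where x: "0 < x" "x < s" "h s - h 0 = (f x * g x * exp (- m * x) + exp (- m * x) * (- m) * f x) * (s - 0)"
    using mvt0[OF dh _ s0] by auto
  have eq: "f x * g x * exp (- m * x) + exp (- m * x) * (- m) * f x = f x * exp (- m * x) * (g x - m)"
    by (simp add: algebra_simps)
  have fx: "f x > 0" using s x by auto
  have gx: "g x - m \<ge> 0" using m x by auto
  have hs: "h s - h 0 = (f x * exp (- m * x)) * (g x - m) * s" using x(3) unfolding eq by simp
  have "(f x * exp (- m * x)) * (g x - m) * s \<ge> 0"
    using fx gx s0 by (intro mult_nonneg_nonneg) auto
  then have "h s - h 0 \<ge> 0" unfolding hs .
  moreover have "h s \<le> 0" using s unfolding h_def by (simp add: mult_nonpos_nonneg)
  moreover have "h 0 > 0" using f0 unfolding h_def by simp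
  ultimately show False by linarith
qed

theorem lemma3:
  fixes r1 r2 \<mu> a12 a13 a21 a31 :: real
    and u v w :: "real \<Rightarrow> real"
  assumes pos: "r1 > 0" "r2 > 0" "\<mu> > 0" "a12 > 0" "a13 > 0" "a21 > 0" "a31 > 0"
    and hyp: "a31 \<le> \<mu>"
    and du: "\<And>t. t \<ge> 0 \<Longrightarrow>
      (u has_real_derivative (r1 * u t * (1 - u t) - a12 * u t * v t - a13 * u t * w t)) (at t within {0..})"
    and dv: "\<And>t. t \<ge> 0 \<Longrightarrow>
      (v has_real_derivative (r2 * v t * (1 - v t) + a21 * u t * v t)) (at t within {0..})"
    and dw: "\<And>t. t \<ge> 0 \<Longrightarrow>
      (w has_real_derivative (- \<mu> * w t + a31 * u t * w t)) (at t within {0..})"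
    and init: "u 0 > 0" "v 0 > 0" "w 0 > 0"
  shows "(w \<longlongrightarrow> 0) at_top"
proof -
  have cu: "continuous_on {0..} u" by (rule cont0[OF du])
  have cv: "continuous_on {0..} v" by (rule cont0[OF dv])
  have cw: "continuous_on {0..} w" by (rule cont0[OF dw])
  have du': "(u has_real_derivative u t * (r1 * (1 - u t) - a12 * v t - a13 * w t)) (at t within {0..})"
    if "t \<ge> 0" for t
  proof -
    have "r1 * u t * (1 - u t) - a12 * u t * v t - a13 * u t * w t = u t * (r1 * (1 - u t) - a12 * v t - a13 * w t)"
      by (simp add: algebra_simps)
    then show ?thesis using du[OF that] by simp
  qed
  have dv': "(v has_real_derivative v t * (r2 * (1 - v t) + a21 * u t)) (at t within {0..})"
    if "t \<ge> 0" for t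
  proof -
    have "r2 * v t * (1 - v t) + a21 * u t * v t = v t * (r2 * (1 - v t) + a21 * u t)"
      by (simp add: algebra_simps)
    then show ?thesis using dv[OF that] by simp
  qed
  have dw': "(w has_real_derivative w t * (- \<mu> + a31 * u t)) (at t within {0..})"
    if "t \<ge> 0" for t
  proof -
    have "- \<mu> * w t + a31 * u t * w t = w t * (- \<mu> + a31 * u t)"
      by (simp add: algebra_simps)
    then show ?thesis using dw[OF that] by simp
  qed
  have upos: "u t > 0" if "t \<ge> 0" for t
    by (rule pos0[OF du' _ init(1) that]) (auto intro!: continuous_intros simp: cu cv cw)
  have vpos: "v t > 0" if "t \<ge> 0" for t
    by (rule pos0[OF dv' _ init(2) that]) (auto intro!: continuous_intros simp: cu cv cw)
  have wpos: "w t > 0" if "t \<ge> 0" for t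
    by (rule pos0[OF dw' _ init(3) that]) (auto intro!: continuous_intros simp: cu cv cw)
  define c where "c = min (v 0) 1"
  have c0: "c > 0" "c \<le> 1" using init unfolding c_def by auto
  have vlow: "v t \<ge> c" if tge: "t \<ge> 0" for t
  proof (rule ccontr)
    assume "\<not> v t \<ge> c"
    hence vt: "v t < c" by simp
    have cnv: "continuous_on {0..t} (\<lambda>x. - v x)"
      by (intro continuous_intros continuous_on_subset[OF cv]) auto
    obtain s where s: "s \<in> {0..t}" "- v s \<le> - c" "\<forall>x\<in>{s<..t}. - v x > - c"
      using last_hit[OF cnv tge, of "-c"] c_def by auto
    have "s < t" using s vt by (cases "s = t") auto
    then obtain x where x: "s < x" "x < t" "v t - v s = (r2 * v x * (1 - v x) + a21 * u x * v x) * (t - s)"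
      using mvt0[OF dv, of s t] s by auto
    have vx: "v x < c" "v x > 0" "u x > 0" using s x vpos upos by auto
    have "r2 * v x * (1 - v x) \<ge> 0" using vx c0 pos by simp
    moreover have "a21 * u x * v x > 0" using vx pos by simp
    ultimately have "v t - v s > 0" using x \<open>s < t\<close> by simp
    then show False using s vt by simp
  qed
  define \<theta> where "\<theta> = max (1/2) (1 - a12 * c / (2 * r1))"
  define \<kappa> where "\<kappa> = \<theta> * (a12 * c / 2)"
  have q: "a12 * c / (2 * r1) > 0" using pos c0 by simp
  have th1: "\<theta> > 0" unfolding \<theta>_def by simp
  have th2: "\<theta> < 1" unfolding \<theta>_def using q by simp
  have th3: "1 - \<theta> \<le> a12 * c / (2 * r1)" unfolding \<theta>_def by simp
  have "r1 * (1 - \<theta>) \<le> r1 * (a12 * c / (2 * r1))" using th3 pos by (simp only: mult_left_mono less_imp_le)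
  also have "\<dots> = a12 * c / 2" using pos by simp
  finally have th: "\<theta> > 0" "\<theta> < 1" "r1 * (1 - \<theta>) \<le> a12 * c / 2" using th1 th2 by auto
  have ka: "\<kappa> > 0" using th pos c0 unfolding \<kappa>_def by simp
  have Du: "r1 * u t * (1 - u t) - a12 * u t * v t - a13 * u t * w t \<le> - \<kappa>"
    if "t \<ge> 0" "u t \<ge> \<theta>" for t
  proof -
    have "r1 * (1 - u t) \<le> r1 * (1 - \<theta>)" using that pos by simp
    moreover have "a12 * v t \<ge> a12 * c" using vlow[OF that(1)] pos by simp
    moreover have "a13 * w t > 0" using wpos[OF that(1)] pos by simp
    ultimately have A: "r1 * (1 - u t) - a12 * v t - a13 * w t \<le> - (a12 * c / 2)"
      using th by linarith
    have "u t * (r1 * (1 - u t) - a12 * v t - a13 * w t) \<le> u t * (- (a12 * c / 2))"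
      by (rule mult_left_mono[OF A]) (use upos[OF that(1)] in simp)
    also have "\<dots> \<le> \<theta> * (- (a12 * c / 2))"
      using that pos c0 by (intro mult_right_mono_neg) auto
    finally show ?thesis unfolding \<kappa>_def by (simp add: algebra_simps)
  qed
  have ex1: "\<exists>t1\<ge>0. u t1 \<le> \<theta>"
  proof (rule ccontr)
    assume na: "\<not> (\<exists>t1\<ge>0. u t1 \<le> \<theta>)"
    have all: "u t > \<theta>" if "t \<ge> 0" for t using na that by force
    define T where "T = u 0 / \<kappa>"
    have T: "T > 0" using init ka unfolding T_def by simp
    have kT: "\<kappa> * T = u 0" using ka unfolding T_def by simp
    obtain x where x: "0 < x" "x < T" "u T - u 0 = (r1 * u x * (1 - u x) - a12 * u x * v x - a13 * u x * w x) * (T - 0)"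
      using mvt0[OF du, of 0 T] T by auto
    have x0: "0 \<le> x" using x by simp
    have ux: "\<theta> \<le> u x" using all[OF x0] by simp
    have Dle: "r1 * u x * (1 - u x) - a12 * u x * v x - a13 * u x * w x \<le> - \<kappa>"
      by (rule Du[OF x0 ux])
    have "u T - u 0 \<le> - \<kappa> * T" using x(3) mult_right_mono[OF Dle, of T] T by simp
    hence "u T \<le> 0" using kT by simp
    then show False using upos[of T] T by simp
  qed
  then obtain t1 where t1: "t1 \<ge> 0" "u t1 \<le> \<theta>" by blast
  have ustay: "u t \<le> \<theta>" if tge: "t \<ge> t1" for t
  proof (rule ccontr)
    assume "\<not> u t \<le> \<theta>"
    hence ut: "u t > \<theta>" by simp
    have cnu: "continuous_on {t1..t} u" by (rule continuous_on_subset[OF cu]) (use t1 in auto)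
    obtain s where s: "s \<in> {t1..t}" "u s \<le> \<theta>" "\<forall>x\<in>{s<..t}. u x > \<theta>"
      using last_hit[OF cnu tge t1(2)] by auto
    have "s < t" using s ut by (cases "s = t") auto
    then obtain x where x: "s < x" "x < t" "u t - u s = (r1 * u x * (1 - u x) - a12 * u x * v x - a13 * u x * w x) * (t - s)"
      using mvt0[OF du, of s t] s t1 by auto
    have Dle: "r1 * u x * (1 - u x) - a12 * u x * v x - a13 * u x * w x \<le> - \<kappa>"
    proof -
      have "x \<in> {s<..t}" using x by simp
      then have "\<theta> < u x" using s(3) by blast
      then have ux: "\<theta> \<le> u x" by simp
      have x0: "0 \<le> x" using s x t1 by auto
      show ?thesis by (rule Du[OF x0 ux])
    qed
    have "u t - u s \<le> - \<kappa> * (t - s)" using x(3) mult_right_mono[OF Dle, of "t - s"] \<open>s < t\<close> by simp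
    moreover have "\<kappa> * (t - s) > 0" using ka \<open>s < t\<close> by simp
    ultimately have "u t - u s < 0" by simp
    then show False using s ut by simp
  qed
  define lam where "lam = \<mu> * (1 - \<theta>)"
  have lam: "lam > 0" using pos th unfolding lam_def by simp
  define h where "h = (\<lambda>x. w x * exp (lam * x))"
  have dh: "(h has_real_derivative ((- \<mu> * w x + a31 * u x * w x) * exp (lam * x) + exp (lam * x) * lam * w x)) (at x within {0..})"
    if "x \<ge> 0" for x
  proof -
    have e: "((\<lambda>x. exp (lam * x)) has_real_derivative exp (lam * x) * lam) (at x within {0..})"
      by (auto intro!: derivative_eq_intros)
    show ?thesis unfolding h_def by (rule DERIV_mult[OF dw[OF that] e])
  qed
  have hdec: "h t \<le> h t1" if "t \<ge> t1" for t
  proof (cases "t = t1")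
    case False
    then have "t1 < t" using that by simp
    then obtain x where x: "t1 < x" "x < t" "h t - h t1 = ((- \<mu> * w x + a31 * u x * w x) * exp (lam * x) + exp (lam * x) * lam * w x) * (t - t1)"
      using mvt0[OF dh, of t1 t] t1 by auto
    have eq: "(- \<mu> * w x + a31 * u x * w x) * exp (lam * x) + exp (lam * x) * lam * w x
        = (w x * exp (lam * x)) * (- \<mu> + a31 * u x + lam)" by (simp add: algebra_simps)
    have "a31 * u x \<le> a31 * \<theta>" using ustay[of x] x pos by simp
    also have "\<dots> \<le> \<mu> * \<theta>" using hyp th by (simp add: mult_right_mono)
    finally have "- \<mu> + a31 * u x + lam \<le> 0" unfolding lam_def by (simp add: algebra_simps)
    moreover have "w x * exp (lam * x) > 0" using wpos[of x] x t1 by simp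
    ultimately have "(w x * exp (lam * x)) * (- \<mu> + a31 * u x + lam) \<le> 0"
      by (simp add: mult_pos_neg mult_nonneg_nonpos)
    then have "(w x * exp (lam * x)) * (- \<mu> + a31 * u x + lam) * (t - t1) \<le> 0"
      by (rule mult_nonpos_nonneg) (use \<open>t1 < t\<close> in auto)
    moreover have "h t - h t1 = (w x * exp (lam * x)) * (- \<mu> + a31 * u x + lam) * (t - t1)"
      using x(3) unfolding eq .
    ultimately show ?thesis by simp
  qed simp
  define K where "K = h t1"
  have wb: "w t \<le> K * exp (- lam * t)" if "t \<ge> t1" for t
  proof -
    have "w t = h t * exp (- lam * t)" unfolding h_def by (simp add: mult.assoc flip: exp_add)
    also have "\<dots> \<le> K * exp (- lam * t)" using hdec[OF that] unfolding K_def by simp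
    finally show ?thesis .
  qed
  have e: "((\<lambda>t. exp (- lam * t)) \<longlongrightarrow> 0) at_top"
    by (rule filterlim_compose[OF exp_at_bot filterlim_tendsto_neg_mult_at_bot[OF tendsto_const _ filterlim_ident]])
      (use lam in simp)
  have e2: "((\<lambda>t. K * exp (- lam * t)) \<longlongrightarrow> 0) at_top"
    using tendsto_mult[OF tendsto_const e, of K] by simp
  show ?thesis
  proof (rule tendsto_sandwich[OF _ _ tendsto_const e2])
    show "\<forall>\<^sub>F t in at_top. 0 \<le> w t"
      using eventually_ge_at_top[of 0] by eventually_elim (simp add: less_imp_le wpos)
    show "\<forall>\<^sub>F t in at_top. w t \<le> K * exp (- lam * t)"
      using eventually_ge_at_top[of t1] by eventually_elim (use wb in auto)
  qed
qed

end
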